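(* Let $A$ be a free finitely generated abelian group endowed with a structure of commutative ring, and let $\chi\colon A\to\mathbb{Z}$ be a linear map such that the symmetric pairing $\langle x,y\rangle:=\chi(x\cdot y)$ on $A$ is unimodular. Let $A=F^0A\supset F^1A\supset\ldots\supset F^dA\supset F^{d+1}A=0$ be a decreasing filtration with $F^iA\cdot F^jA\subset F^{i+j}A$ for all $i,j\geqslant0$, and assume $\mathrm{rk}(\mathrm{gr}^i_FA)=\mathrm{rk}(\mathrm{gr}^{d-i}_FA)$ for each $0\leqslant i\leqslant d$. Suppose the filtration splits, i.e. for each $i$, $0\leqslant i\leqslant d$, the quotient $A/F^iA$ is torsion-free. Then for each $i$, $0\leqslant i\leqslant d$, the induced pairing between free finitely generated abelian groups $\langle\cdot,\cdot\rangle_i\colon\mathrm{gr}^i_FA\otimes\mathrm{gr}^{d-i}_FA\to\mathbb{Z}$ is unimodular.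
   Context: $\mathrm{gr}^i_FA=F^iA/F^{i+1}A$. The pairing $\langle\cdot,\cdot\rangle_i$ is induced by $\langle\cdot,\cdot\rangle$, which is well defined on these quotients since $\langle F^iA,F^jA\rangle=0$ when $i+j\geqslant d+1$. *)

theory Defs
  imports Main
begin

definition free_fg :: "'a::comm_ring_1 itself \<Rightarrow> bool" where
  "free_fg _ \<longleftrightarrow> (\<exists>B::'a set. finite B \<and>
     (\<forall>x::'a. \<exists>!c::'a \<Rightarrow> int. (\<forall>b. b \<notin> B \<longrightarrow> c b = 0) \<and>
                            x = (\<Sum>b\<in>B. of_int (c b) * b)))"

definition additive_on :: "'a::ab_group_add set \<Rightarrow> ('a \<Rightarrow> int) \<Rightarrow> bool" where
  "additive_on S f \<longleftrightarrow> (\<forall>x\<in>S. \<forall>y\<in>S. f (x + y) = f x + f y)"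

definition add_subgroup :: "'a::ab_group_add set \<Rightarrow> bool" where
  "add_subgroup H \<longleftrightarrow> 0 \<in> H \<and> (\<forall>x\<in>H. \<forall>y\<in>H. x + y \<in> H \<and> - x \<in> H)"

definition zindep_mod :: "'a::comm_ring_1 set \<Rightarrow> 'a set \<Rightarrow> bool" where
  "zindep_mod H S \<longleftrightarrow> (\<forall>c::'a \<Rightarrow> int. (\<Sum>s\<in>S. of_int (c s) * s) \<in> H \<longrightarrow> (\<forall>s\<in>S. c s = 0))"

definition rank_quot :: "'a::comm_ring_1 set \<Rightarrow> 'a set \<Rightarrow> nat" where
  "rank_quot G H = Sup {card S | S. finite S \<and> S \<subseteq> G \<and> zindep_mod H S}"

definition unimodular_pairing :: "('a::comm_ring_1 \<Rightarrow> int) \<Rightarrow> bool" where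
  "unimodular_pairing \<chi> \<longleftrightarrow>
     (\<forall>\<phi>::'a \<Rightarrow> int. additive_on UNIV \<phi> \<longrightarrow> (\<exists>!x. \<forall>y. \<phi> y = \<chi> (x * y)))"

text \<open>The induced pairing gr^i_F A \<otimes> gr^(d-i)_F A \<rightarrow> Z, where gr^i_F A = F i / F (i+1),
  is unimodular: the induced map gr^i \<rightarrow> Hom(gr^(d-i), Z) is bijective.\<close>
definition induced_unimodular ::
  "('a::comm_ring_1 \<Rightarrow> int) \<Rightarrow> (nat \<Rightarrow> 'a set) \<Rightarrow> nat \<Rightarrow> nat \<Rightarrow> bool" where
  "induced_unimodular \<chi> F d i \<longleftrightarrow>
     (\<forall>\<phi>::'a \<Rightarrow> int. additive_on (F (d - i)) \<phi> \<and> (\<forall>y\<in>F (d - i + 1). \<phi> y = 0) \<longrightarrow>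
        (\<exists>x\<in>F i. \<forall>y\<in>F (d - i). \<phi> y = \<chi> (x * y)))
   \<and> (\<forall>x\<in>F i. \<forall>x'\<in>F i. (\<forall>y\<in>F (d - i). \<chi> (x * y) = \<chi> (x' * y)) \<longrightarrow> x - x' \<in> F (i + 1))"

end

theory Submission
  imports Defs
begin

definition sat :: "'a::comm_ring_1 set \<Rightarrow> bool" where
  "sat H \<longleftrightarrow> (\<forall>x k. k \<noteq> (0::int) \<longrightarrow> of_int k * x \<in> H \<longrightarrow> x \<in> H)"

definition zspan :: "'a::comm_ring_1 set \<Rightarrow> 'a set" where
  "zspan T = {x. \<exists>c. x = (\<Sum>t\<in>T. of_int (c t) * t)}"

lemma sg0: "add_subgroup H \<Longrightarrow> 0 \<in> H" by (simp add: add_subgroup_def)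
lemma sg_add: "add_subgroup H \<Longrightarrow> x \<in> H \<Longrightarrow> y \<in> H \<Longrightarrow> x + y \<in> H" by (simp add: add_subgroup_def)
lemma sg_uminus: "add_subgroup H \<Longrightarrow> x \<in> H \<Longrightarrow> - x \<in> H" by (simp add: add_subgroup_def)
lemma sg_diff: "add_subgroup H \<Longrightarrow> x \<in> H \<Longrightarrow> y \<in> H \<Longrightarrow> x - y \<in> H"
  by (metis diff_conv_add_uminus sg_add sg_uminus)

lemma sg_of_nat: "add_subgroup H \<Longrightarrow> x \<in> H \<Longrightarrow> of_nat n * (x::'a::comm_ring_1) \<in> H"
  by (induction n) (auto simp: distrib_right sg0 sg_add)

lemma sg_of_int: assumes "add_subgroup H" "x \<in> H" shows "of_int k * (x::'a::comm_ring_1) \<in> H"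
proof (cases k rule: int_cases2)
  case (nonneg n) then show ?thesis using sg_of_nat[OF assms] by simp
next
  case (nonpos n) then show ?thesis using sg_of_nat[OF assms, of n] sg_uminus[OF assms(1)] by simp
qed

lemma sg_sum: assumes "add_subgroup H" "\<And>s. s \<in> S \<Longrightarrow> f s \<in> H" shows "sum f S \<in> H"
proof (cases "finite S")
  case True then show ?thesis using assms(2)
    by (induction S rule: finite_induct) (auto simp: sg0[OF assms(1)] sg_add[OF assms(1)])
qed (simp add: sg0[OF assms(1)])

lemma sg_UNIV: "add_subgroup UNIV" by (simp add: add_subgroup_def)

lemma ad_0: "additive_on H \<phi> \<Longrightarrow> 0 \<in> H \<Longrightarrow> \<phi> 0 = 0"
  unfolding additive_on_def by (metis add.right_neutral add_cancel_right_right)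

lemma ad_add: "additive_on H \<phi> \<Longrightarrow> x \<in> H \<Longrightarrow> y \<in> H \<Longrightarrow> \<phi> (x + y) = \<phi> x + \<phi> y"
  unfolding additive_on_def by blast

lemma ad_uminus: "additive_on H \<phi> \<Longrightarrow> add_subgroup H \<Longrightarrow> x \<in> H \<Longrightarrow> \<phi> (- x) = - \<phi> x"
  using ad_add[of H \<phi> x "-x"] ad_0[of H \<phi>] sg0 sg_uminus by fastforce

lemma ad_diff: "additive_on H \<phi> \<Longrightarrow> add_subgroup H \<Longrightarrow> x \<in> H \<Longrightarrow> y \<in> H \<Longrightarrow> \<phi> (x - y) = \<phi> x - \<phi> y"
  using ad_add[of H \<phi> x "-y"] ad_uminus[of H \<phi> y] sg_uminus by fastforce

lemma ad_of_nat: "additive_on H \<phi> \<Longrightarrow> add_subgroup H \<Longrightarrow> x \<in> H \<Longrightarrow> \<phi> (of_nat n * (x::'a::comm_ring_1)) = of_nat n * \<phi> x"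
proof (induction n)
  case 0 then show ?case using ad_0[of H \<phi>] sg0[of H] by simp
next
  case (Suc n)
  have "\<phi> (of_nat (Suc n) * x) = \<phi> (of_nat n * x + x)" by (simp add: algebra_simps)
  also have "\<dots> = \<phi> (of_nat n * x) + \<phi> x" using Suc.prems sg_of_nat by (metis ad_add)
  finally show ?case using Suc by (simp add: distrib_right)
qed

lemma ad_of_int: assumes "additive_on H \<phi>" "add_subgroup H" "x \<in> H"
  shows "\<phi> (of_int k * (x::'a::comm_ring_1)) = k * \<phi> x"
proof (cases k rule: int_cases2)
  case (nonneg n) then show ?thesis using ad_of_nat[OF assms] by simp
next
  case (nonpos n)
  have "\<phi> (of_int k * x) = \<phi> (- (of_nat n * x))" using nonpos by simp
  also have "\<dots> = - \<phi> (of_nat n * x)" using ad_uminus[OF assms(1,2)] sg_of_nat[OF assms(2,3)] by blast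
  finally show ?thesis using nonpos ad_of_nat[OF assms] by simp
qed

lemma ad_sum: assumes "additive_on H \<phi>" "add_subgroup H" "\<And>s. s \<in> S \<Longrightarrow> f s \<in> H"
  shows "\<phi> (sum f S) = (\<Sum>s\<in>S. \<phi> (f s))"
proof (cases "finite S")
  case True
  then show ?thesis using assms(3)
  proof (induction S rule: finite_induct)
    case empty then show ?case using ad_0[OF assms(1) sg0[OF assms(2)]] by simp
  next
    case (insert a F)
    have "\<phi> (sum f (insert a F)) = \<phi> (f a + sum f F)" using insert by simp
    also have "\<dots> = \<phi> (f a) + \<phi> (sum f F)"
      using insert.prems sg_sum[OF assms(2), of F f] ad_add[OF assms(1)] by simp
    finally show ?case using insert by simp
  qed
qed (simp add: ad_0[OF assms(1) sg0[OF assms(2)]])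

lemma ad_lincomb: assumes "additive_on H \<phi>" "add_subgroup H" "S \<subseteq> H"
  shows "\<phi> (\<Sum>s\<in>S. of_int (c s) * (s::'a::comm_ring_1)) = (\<Sum>s\<in>S. c s * \<phi> s)"
proof -
  have "\<phi> (\<Sum>s\<in>S. of_int (c s) * s) = (\<Sum>s\<in>S. \<phi> (of_int (c s) * s))"
    using assms by (intro ad_sum[OF assms(1,2)]) (auto intro: sg_of_int)
  also have "\<dots> = (\<Sum>s\<in>S. c s * \<phi> s)"
    using assms by (intro sum.cong refl) (auto intro: ad_of_int[OF assms(1,2)])
  finally show ?thesis .
qed

lemma lincomb_in: "add_subgroup H \<Longrightarrow> S \<subseteq> H \<Longrightarrow> (\<Sum>s\<in>S. of_int (c s) * (s::'a::comm_ring_1)) \<in> H"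
  by (meson sg_of_int sg_sum subsetD)

lemma delta_sum: assumes "finite U" "u \<in> U" shows " (\<Sum>x\<in>U. of_int (if x = u then k else 0) * x) = of_int k * (u::'a::comm_ring_1)"
proof -
  have "(\<Sum>x\<in>U. of_int (if x = u then k else 0) * x) = (\<Sum>x\<in>U. if x = u then of_int k * x else 0)"
    by (rule sum.cong) auto
  also have "\<dots> = of_int k * u" using assms by (simp only: sum.delta) simp
  finally show ?thesis .
qed

lemma lincomb_combine:
  "(\<Sum>v\<in>V. of_int (e v) * (\<Sum>x\<in>U. of_int (F v x) * x)) = (\<Sum>x\<in>U. of_int (\<Sum>v\<in>V. e v * F v x) * (x::'a::comm_ring_1))"
  by (simp add: sum_distrib_left sum_distrib_right mult.assoc sum.swap[of _ V])


abbreviation indep :: "'a::comm_ring_1 set \<Rightarrow> bool" where "indep S \<equiv> zindep_mod {0} S"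

lemma indepD: "indep U \<Longrightarrow> (\<Sum>u\<in>U. of_int (c u) * u) = 0 \<Longrightarrow> u \<in> U \<Longrightarrow> c u = 0"
  unfolding zindep_mod_def by blast

lemma indepI: "(\<And>c. (\<Sum>u\<in>U. of_int (c u) * u) = 0 \<Longrightarrow> \<forall>u\<in>U. c u = 0) \<Longrightarrow> indep U"
  unfolding zindep_mod_def by blast

lemma indep_transform:
  fixes g :: "'b \<Rightarrow> 'a::comm_ring_1"
  assumes U: "finite U" "indep U" and V: "finite V"
    and g: "\<And>v. v \<in> V \<Longrightarrow> g v = (\<Sum>x\<in>U. of_int (F v x) * x)"
    and F: "\<And>e. (\<And>x. x \<in> U \<Longrightarrow> (\<Sum>v\<in>V. e v * F v x) = 0) \<Longrightarrow> (\<forall>v\<in>V. e v = 0)"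
  shows "inj_on g V \<and> indep (g ` V)"
proof
  show inj: "inj_on g V"
  proof (rule inj_onI, rule ccontr)
    fix v w assume vw: "v \<in> V" "w \<in> V" "g v = g w" "v \<noteq> w"
    define e where "e = (\<lambda>y. (if y = v then 1 else 0) - (if y = w then 1 else (0::int)))"
    have "(\<Sum>x\<in>U. of_int (F v x - F w x) * x) = g v - g w"
      using vw g by (simp add: left_diff_distrib sum_subtractf)
    then have "(\<Sum>x\<in>U. of_int (F v x - F w x) * x) = 0" using vw by simp
    then have d: "\<And>x. x \<in> U \<Longrightarrow> F v x - F w x = 0" using indepD[OF U(2), of "\<lambda>x. F v x - F w x"] by blast
    have "\<And>x. x \<in> U \<Longrightarrow> (\<Sum>y\<in>V. e y * F y x) = 0"
    proof -
      fix x assume "x \<in> U"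
      have "(\<Sum>y\<in>V. e y * F y x) = (\<Sum>y\<in>V. (if y = v then F y x else 0)) - (\<Sum>y\<in>V. (if y = w then F y x else 0))"
      proof -
        have "\<And>y. e y * F y x = (if y = v then F y x else 0) - (if y = w then F y x else 0)"
          unfolding e_def by (simp add: left_diff_distrib)
        then show ?thesis by (simp add: sum_subtractf)
      qed
      also have "\<dots> = F v x - F w x" using vw V by (simp add: sum.delta)
      finally show "(\<Sum>y\<in>V. e y * F y x) = 0" using d \<open>x \<in> U\<close> by simp
    qed
    then have "e v = 0" using F vw by blast
    then show False using vw unfolding e_def by simp
  qed
  show "indep (g ` V)"
  proof (rule indepI)
    fix e assume e0: "(\<Sum>u\<in>g ` V. of_int (e u) * u) = 0"
    have "(\<Sum>u\<in>g ` V. of_int (e u) * u) = (\<Sum>v\<in>V. of_int (e (g v)) * g v)"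
      using sum.reindex[OF inj] by simp
    also have "\<dots> = (\<Sum>v\<in>V. of_int (e (g v)) * (\<Sum>x\<in>U. of_int (F v x) * x))"
      using g by (intro sum.cong) auto
    also have "\<dots> = (\<Sum>x\<in>U. of_int (\<Sum>v\<in>V. e (g v) * F v x) * x)" by (rule lincomb_combine)
    finally have "(\<Sum>x\<in>U. of_int (\<Sum>v\<in>V. e (g v) * F v x) * x) = 0" using e0 by simp
    then have "\<And>x. x \<in> U \<Longrightarrow> (\<Sum>v\<in>V. e (g v) * F v x) = 0"
      using indepD[OF U(2), of "\<lambda>x. (\<Sum>v\<in>V. e (g v) * F v x)"] by blast
    then have "\<forall>v\<in>V. e (g v) = 0" using F[of "\<lambda>v. e (g v)"] by blast
    then show "\<forall>u\<in>g ` V. e u = 0" by blast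
  qed
qed


lemma zspan_empty: "x \<in> zspan {} \<Longrightarrow> x = 0" by (simp add: zspan_def)

lemma zspan_sum: "(\<Sum>t\<in>T. of_int (c t) * t) \<in> zspan T" by (auto simp: zspan_def)

lemma zspan_insert: assumes "finite T" "t \<notin> T" "x \<in> zspan (insert t T)"
  shows "\<exists>a y. y \<in> zspan T \<and> x = of_int a * t + y"
proof -
  obtain c where "x = (\<Sum>s\<in>insert t T. of_int (c s) * s)" using assms(3) by (auto simp: zspan_def)
  then have "x = of_int (c t) * t + (\<Sum>s\<in>T. of_int (c s) * s)" using assms by simp
  then show ?thesis using zspan_sum by blast
qed

lemma zspan_comb: assumes "y \<in> zspan T" "z \<in> zspan T"
  shows "of_int a * y - of_int b * z \<in> zspan T"
proof -
  obtain c d where "y = (\<Sum>t\<in>T. of_int (c t) * t)" "z = (\<Sum>t\<in>T. of_int (d t) * t)"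
    using assms by (auto simp: zspan_def)
  then have "of_int a * y - of_int b * z = (\<Sum>t\<in>T. of_int (a * c t - b * d t) * t)"
    by (simp add: sum_distrib_left sum_subtractf algebra_simps)
  then show ?thesis using zspan_sum by metis
qed

lemma steinitz:
  assumes "finite T" shows "finite U \<Longrightarrow> indep U \<Longrightarrow> U \<subseteq> zspan T \<Longrightarrow> card U \<le> card T"
  using assms
proof (induction T arbitrary: U rule: finite_induct)
  case empty
  have U0: "U \<subseteq> {0}" using empty zspan_empty by blast
  have "U = {}"
  proof (rule ccontr)
    assume "U \<noteq> {}" then have "U = {0}" using U0 by blast
    then show False using indepD[OF empty(2), of "\<lambda>_. 1" 0] by simp
  qed
  then show ?case by simp
next
  case (insert t T)
  have "\<forall>u\<in>U. \<exists>p. snd p \<in> zspan T \<and> u = of_int (fst p) * t + snd p"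
    using insert zspan_insert by fastforce
  then obtain p where p: "\<And>u. u\<in>U \<Longrightarrow> snd (p u) \<in> zspan T \<and> u = of_int (fst (p u)) * t + snd (p u)"
    by metis
  define a where "a u = fst (p u)" for u
  define y where "y u = snd (p u)" for u
  have ay: "\<And>u. u\<in>U \<Longrightarrow> y u \<in> zspan T \<and> u = of_int (a u) * t + y u"
    using p unfolding a_def y_def by blast
  show ?case
  proof (cases "\<forall>u\<in>U. a u = 0")
    case True
    have "U \<subseteq> zspan T"
    proof
      fix u assume u: "u \<in> U"
      have e: "u = of_int (a u) * t + y u" "y u \<in> zspan T" using ay[OF u] by blast+
      have "of_int (a u) * t + y u = y u" using True u by simp
      then show "u \<in> zspan T" using e by metis
    qed
    then have "card U \<le> card T" using insert.IH insert.prems by blast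
    then show ?thesis using insert by simp
  next
    case False
    then obtain u0 where u0: "u0 \<in> U" "a u0 \<noteq> 0" by blast
    define U0 where "U0 = U - {u0}"
    define g where "g u = of_int (a u0) * u - of_int (a u) * u0" for u
    define F where "F u x = (if x = u then a u0 else 0) - (if x = u0 then a u else 0)" for u x
    have finU0: "finite U0" using insert.prems U0_def by simp
    have gF: "g u = (\<Sum>x\<in>U. of_int (F u x) * x)" if "u \<in> U0" for u
    proof -
      have "\<And>x. of_int (F u x) * x = of_int (if x = u then a u0 else 0) * x - of_int (if x = u0 then a u else 0) * x"
        unfolding F_def by (simp add: left_diff_distrib)
      then have "(\<Sum>x\<in>U. of_int (F u x) * x) = (\<Sum>x\<in>U. of_int (if x = u then a u0 else 0) * x) - (\<Sum>x\<in>U. of_int (if x = u0 then a u else 0) * x)"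
        by (simp add: sum_subtractf)
      also have "\<dots> = g u" using delta_sum[of U u] delta_sum[of U u0] that u0 insert.prems
        unfolding g_def U0_def by simp
      finally show ?thesis by simp
    qed
    have Fc: "\<forall>v\<in>U0. e v = 0" if e: "\<And>x. x \<in> U \<Longrightarrow> (\<Sum>v\<in>U0. e v * F v x) = 0" for e
    proof
      fix x assume x: "x \<in> U0"
      have "\<And>v. v \<in> U0 \<Longrightarrow> e v * F v x = (if v = x then e x * a u0 else 0)"
        using x unfolding F_def U0_def by auto
      then have "(\<Sum>v\<in>U0. e v * F v x) = (\<Sum>v\<in>U0. if v = x then e x * a u0 else 0)"
        by (rule sum.cong[OF refl])
      also have "\<dots> = e x * a u0" using x finU0 by simp
      finally show "e x = 0" using e[of x] x u0 unfolding U0_def by simp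
    qed
    have ti: "inj_on g U0 \<and> indep (g ` U0)"
      by (rule indep_transform[OF insert.prems(1,2) finU0 gF Fc]) auto
    have "g ` U0 \<subseteq> zspan T"
    proof
      fix z assume "z \<in> g ` U0"
      then obtain u where u: "u \<in> U0" "z = g u" by blast
      have e: "u = of_int (a u) * t + y u" "u0 = of_int (a u0) * t + y u0"
        using ay[of u] ay[of u0] u u0 unfolding U0_def by auto
      have gen: "\<And>p q. p = of_int (a u) * t + y u \<Longrightarrow> q = of_int (a u0) * t + y u0 \<Longrightarrow>
          of_int (a u0) * p - of_int (a u) * q = of_int (a u0) * y u - of_int (a u) * y u0"
        by (simp add: algebra_simps)
      have "z = of_int (a u0) * y u - of_int (a u) * y u0"
        using gen[OF e] u(2) unfolding g_def by simp
      moreover have "y u \<in> zspan T" "y u0 \<in> zspan T" using ay[of u] ay[of u0] u u0 unfolding U0_def by auto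
      ultimately show "z \<in> zspan T" using zspan_comb by metis
    qed
    then have "card (g ` U0) \<le> card T" using insert.IH ti finU0 by blast
    moreover have "card (g ` U0) = card U0" using ti by (simp add: card_image)
    ultimately have "card U0 \<le> card T" by simp
    then show ?thesis using insert u0 unfolding U0_def by (simp add: card_Diff_singleton)
  qed
qed


lemma zindep_mod_0: "0 \<in> H \<Longrightarrow> zindep_mod H S \<Longrightarrow> indep S"
  unfolding zindep_mod_def by auto

locale fr =
  fixes B :: "'a::comm_ring_1 set"
  assumes finB: "finite B"
    and basisB: "\<forall>x::'a. \<exists>!c::'a \<Rightarrow> int. (\<forall>b. b \<notin> B \<longrightarrow> c b = 0) \<and> x = (\<Sum>b\<in>B. of_int (c b) * b)"
begin

definition coord :: "'a \<Rightarrow> 'a \<Rightarrow> int" where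
  "coord x = (THE c. (\<forall>b. b \<notin> B \<longrightarrow> c b = 0) \<and> x = (\<Sum>b\<in>B. of_int (c b) * b))"

lemma coord: "(\<forall>b. b \<notin> B \<longrightarrow> coord x b = 0) \<and> x = (\<Sum>b\<in>B. of_int (coord x b) * b)"
  unfolding coord_def by (rule theI'[OF basisB[rule_format, of x]])

lemma coord_unique: "(\<forall>b. b \<notin> B \<longrightarrow> c b = 0) \<Longrightarrow> x = (\<Sum>b\<in>B. of_int (c b) * b) \<Longrightarrow> coord x = c"
  unfolding coord_def by (rule the1_equality[OF basisB[rule_format]]) simp

lemma coord_add: "coord (x + y) b = coord x b + coord y b"
proof -
  have "coord (x + y) = (\<lambda>b. coord x b + coord y b)"
  proof (rule coord_unique)
    show "\<forall>b. b \<notin> B \<longrightarrow> coord x b + coord y b = 0" using coord by simp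
    have "x + y = (\<Sum>b\<in>B. of_int (coord x b) * b) + (\<Sum>b\<in>B. of_int (coord y b) * b)"
      using coord by metis
    then show "x + y = (\<Sum>b\<in>B. of_int (coord x b + coord y b) * b)"
      by (simp add: sum.distrib distrib_right)
  qed
  then show ?thesis by simp
qed

lemma coord_smult: "coord (of_int k * x) b = k * coord x b"
proof -
  have "coord (of_int k * x) = (\<lambda>b. k * coord x b)"
  proof (rule coord_unique)
    show "\<forall>b. b \<notin> B \<longrightarrow> k * coord x b = 0" using coord by simp
    have "of_int k * x = of_int k * (\<Sum>b\<in>B. of_int (coord x b) * b)"
      using coord by metis
    then show "of_int k * x = (\<Sum>b\<in>B. of_int (k * coord x b) * b)"
      by (simp add: sum_distrib_left mult.assoc)
  qed
  then show ?thesis by simp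
qed

lemma coord_additive: "additive_on UNIV (\<lambda>x. coord x b)"
  unfolding additive_on_def by (simp add: coord_add)

lemma coord_zero_imp: "(\<And>b. b \<in> B \<Longrightarrow> coord x b = 0) \<Longrightarrow> x = 0"
  using coord[of x] by simp

lemma in_span: "(x::'a) \<in> zspan B"
  using coord[of x] zspan_sum by metis

lemma card_bound: "finite S \<Longrightarrow> indep (S::'a set) \<Longrightarrow> card S \<le> card B"
  by (rule steinitz[OF finB]) (auto intro: in_span)

lemma torsion_free: "k \<noteq> 0 \<Longrightarrow> of_int k * (x::'a) = 0 \<Longrightarrow> x = 0"
proof -
  assume k: "k \<noteq> 0" "of_int k * x = 0"
  have "\<And>b. k * coord x b = coord 0 b" using coord_smult[of k x] k by simp
  moreover have "\<And>b. coord 0 b = 0" using coord_smult[of 0 0] by simp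
  ultimately show "x = 0" using k by (intro coord_zero_imp) simp
qed

lemma indep_single: "(x::'a) \<noteq> 0 \<Longrightarrow> indep {x}"
  by (rule indepI) (use torsion_free in auto)

lemma rq_set: assumes "0 \<in> (H::'a set)"
  shows "finite {card S |S. finite S \<and> S \<subseteq> G \<and> zindep_mod H S}"
    and "{card S |S. finite S \<and> S \<subseteq> G \<and> zindep_mod H S} \<noteq> {}"
proof -
  have "{card S |S. finite S \<and> S \<subseteq> G \<and> zindep_mod H S} \<subseteq> {..card B}"
    using card_bound zindep_mod_0[OF assms] by auto
  then show "finite {card S |S. finite S \<and> S \<subseteq> G \<and> zindep_mod H S}"
    using finite_subset by blast
  have "zindep_mod H {}" unfolding zindep_mod_def by simp
  then show "{card S |S. finite S \<and> S \<subseteq> G \<and> zindep_mod H S} \<noteq> {}" by blast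
qed

lemma rq_attained: assumes "0 \<in> (H::'a set)"
  shows "\<exists>S. finite S \<and> S \<subseteq> G \<and> zindep_mod H S \<and> card S = rank_quot G H"
proof -
  have "rank_quot G H = Max {card S |S. finite S \<and> S \<subseteq> G \<and> zindep_mod H S}"
    unfolding rank_quot_def using rq_set[OF assms] by (rule cSup_eq_Max)
  moreover have "Max {card S |S. finite S \<and> S \<subseteq> G \<and> zindep_mod H S} \<in> {card S |S. finite S \<and> S \<subseteq> G \<and> zindep_mod H S}"
    using rq_set[OF assms] by (rule Max_in)
  ultimately show ?thesis by auto
qed

lemma rq_upper: assumes "0 \<in> (H::'a set)" "finite S" "S \<subseteq> G" "zindep_mod H S"
  shows "card S \<le> rank_quot G H"
proof -
  have "rank_quot G H = Max {card S |S. finite S \<and> S \<subseteq> G \<and> zindep_mod H S}"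
    unfolding rank_quot_def using rq_set[OF assms(1)] by (rule cSup_eq_Max)
  moreover have "card S \<le> Max {card S |S. finite S \<and> S \<subseteq> G \<and> zindep_mod H S}"
    using rq_set[OF assms(1)] assms by (intro Max_ge) auto
  ultimately show ?thesis by simp
qed

lemma rq_max: assumes "0 \<in> (H::'a set)" "finite S" "S \<subseteq> G" "zindep_mod H S" "card S = rank_quot G H" "g \<in> G"
  shows "\<exists>k c. k \<noteq> 0 \<and> of_int k * g + (\<Sum>s\<in>S. of_int (c s) * s) \<in> H"
proof (cases "g \<in> S")
  case True
  have "of_int 1 * g + (\<Sum>s\<in>S. of_int (if s = g then -1 else 0) * s) = 0"
    using delta_sum[OF assms(2) True, of "-1"] by simp
  then show ?thesis using assms(1) by (metis one_neq_zero)
next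
  case False
  have "\<not> zindep_mod H (insert g S)"
  proof
    assume "zindep_mod H (insert g S)"
    then have "card (insert g S) \<le> rank_quot G H" using rq_upper[OF assms(1)] assms(2,3,6) by simp
    then show False using False assms by simp
  qed
  then obtain c where c: "(\<Sum>s\<in>insert g S. of_int (c s) * s) \<in> H" "\<exists>s\<in>insert g S. c s \<noteq> 0"
    unfolding zindep_mod_def by blast
  have eq: "(\<Sum>s\<in>insert g S. of_int (c s) * s) = of_int (c g) * g + (\<Sum>s\<in>S. of_int (c s) * s)"
    using False assms(2) by simp
  have "c g \<noteq> 0"
  proof
    assume "c g = 0"
    then have "(\<Sum>s\<in>S. of_int (c s) * s) \<in> H" using c eq by simp
    then have "\<forall>s\<in>S. c s = 0" using assms(4) unfolding zindep_mod_def by blast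
    then show False using c \<open>c g = 0\<close> by blast
  qed
  then show ?thesis using c eq by metis
qed

end


lemma steinitz_mult:
  assumes T: "finite T" and U: "finite U" "indep U"
    and k: "\<forall>u\<in>U. \<exists>k. k \<noteq> 0 \<and> of_int k * u \<in> zspan T"
  shows "card U \<le> card T"
proof -
  obtain k where k: "\<And>u. u \<in> U \<Longrightarrow> k u \<noteq> 0 \<and> of_int (k u) * u \<in> zspan T"
    using k by metis
  define g where "g u = of_int (k u) * u" for u
  define F where "F u x = (if x = u then k u else 0)" for u x
  have gF: "g u = (\<Sum>x\<in>U. of_int (F u x) * x)" if "u \<in> U" for u
    unfolding g_def F_def using delta_sum[OF U(1) that] by simp
  have Fc: "\<forall>v\<in>U. e v = 0" if e: "\<And>x. x \<in> U \<Longrightarrow> (\<Sum>v\<in>U. e v * F v x) = 0" for e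
  proof
    fix x assume x: "x \<in> U"
    have "(\<Sum>v\<in>U. e v * F v x) = (\<Sum>v\<in>U. if v = x then e x * k x else 0)"
      unfolding F_def by (rule sum.cong) auto
    also have "\<dots> = e x * k x" using x U(1) by simp
    finally show "e x = 0" using e[OF x] k[OF x] by simp
  qed
  have ti: "inj_on g U \<and> indep (g ` U)"
    by (rule indep_transform[OF U(1,2) U(1) gF Fc]) auto
  have "g ` U \<subseteq> zspan T" using k unfolding g_def by auto
  then have "card (g ` U) \<le> card T" using steinitz[OF T] ti U(1) by blast
  then show ?thesis using ti card_image by metis
qed

context fr
begin

lemma rank_add: assumes G: "add_subgroup G" and H: "add_subgroup (H::'a set)" and HG: "H \<subseteq> G"
  shows "rank_quot G {0} = rank_quot G H + rank_quot H {0}"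
proof -
  have H0: "0 \<in> H" using sg0[OF H] .
  obtain S where S: "finite S" "S \<subseteq> G" "zindep_mod H S" "card S = rank_quot G H"
    using rq_attained[OF H0] by blast
  obtain T where T: "finite T" "T \<subseteq> H" "indep T" "card T = rank_quot H {0}"
    using rq_attained[of "{0}" H] by blast
  have disj: "S \<inter> T = {}"
  proof (rule ccontr)
    assume "S \<inter> T \<noteq> {}" then obtain t where t: "t \<in> S" "t \<in> T" by blast
    have "(\<Sum>s\<in>S. of_int (if s = t then 1 else 0) * s) = t" using delta_sum[OF S(1) t(1), of 1] by simp
    then have "(\<Sum>s\<in>S. of_int (if s = t then 1 else 0) * s) \<in> H" using t T(2) by auto
    moreover have "(\<Sum>s\<in>S. of_int ((\<lambda>s. if s = t then 1 else 0::int) s) * s) \<in> H \<longrightarrow> (\<forall>s\<in>S. (\<lambda>s. if s = t then 1 else 0::int) s = 0)"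
      using S(3) unfolding zindep_mod_def by (rule spec)
    ultimately show False using t by auto
  qed
  have split: "\<And>c. (\<Sum>u\<in>S \<union> T. of_int (c u) * u) = (\<Sum>u\<in>S. of_int (c u) * u) + (\<Sum>u\<in>T. of_int (c u) * u)"
    using sum.union_disjoint[OF S(1) T(1) disj] by blast
  have ge: "card (S \<union> T) \<le> rank_quot G {0}"
  proof (rule rq_upper)
    show "(0::'a) \<in> {0}" by simp
    show "finite (S \<union> T)" using S T by simp
    show "S \<union> T \<subseteq> G" using S T HG by blast
    show "indep (S \<union> T)"
    proof (rule indepI)
      fix c assume c: "(\<Sum>u\<in>S \<union> T. of_int (c u) * u) = 0"
      have "(\<Sum>u\<in>S. of_int (c u) * u) = - (\<Sum>u\<in>T. of_int (c u) * u)"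
        using c split[of c] by (simp add: eq_neg_iff_add_eq_0)
      moreover have "- (\<Sum>u\<in>T. of_int (c u) * u) \<in> H" using lincomb_in[OF H T(2)] sg_uminus[OF H] by blast
      ultimately have cS: "\<forall>u\<in>S. c u = 0" using S(3) unfolding zindep_mod_def by metis
      then have "(\<Sum>u\<in>S. of_int (c u) * u) = 0" by simp
      then have "(\<Sum>u\<in>T. of_int (c u) * u) = 0" using c split[of c] by simp
      then have cT: "\<forall>u\<in>T. c u = 0" using indepD[OF T(3)] by blast
      show "\<forall>u\<in>S \<union> T. c u = 0" using cS cT by blast
    qed
  qed
  obtain U where U: "finite U" "U \<subseteq> G" "indep U" "card U = rank_quot G {0}"
    using rq_attained[of "{0}" G] by blast
  have "\<forall>u\<in>U. \<exists>k. k \<noteq> 0 \<and> of_int k * u \<in> zspan (S \<union> T)"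
  proof
    fix u assume u: "u \<in> U"
    obtain k c where kc: "k \<noteq> 0" "of_int k * u + (\<Sum>s\<in>S. of_int (c s) * s) \<in> H"
      using rq_max[OF H0 S(1-4)] u U(2) by blast
    define h where "h = of_int k * u + (\<Sum>s\<in>S. of_int (c s) * s)"
    have "\<exists>m c'. m \<noteq> 0 \<and> of_int m * h + (\<Sum>t\<in>T. of_int (c' t) * t) \<in> {0}"
      by (rule rq_max[of "{0}" T H h]) (use T kc h_def in auto)
    then obtain m c' where mc: "m \<noteq> 0" "of_int m * h + (\<Sum>t\<in>T. of_int (c' t) * t) = 0"
      by auto
    define C where "C x = (if x \<in> S then - m * c x else - c' x)" for x
    have sS: "(\<Sum>x\<in>S. of_int (C x) * x) = - (of_int m * (\<Sum>s\<in>S. of_int (c s) * s))"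
    proof -
      have "(\<Sum>x\<in>S. of_int (C x) * x) = (\<Sum>x\<in>S. - (of_int m * (of_int (c x) * x)))"
        by (rule sum.cong) (auto simp: C_def mult.assoc)
      then show ?thesis by (simp add: sum_negf sum_distrib_left)
    qed
    have sT: "(\<Sum>x\<in>T. of_int (C x) * x) = - (\<Sum>t\<in>T. of_int (c' t) * t)"
    proof -
      have "(\<Sum>x\<in>T. of_int (C x) * x) = (\<Sum>x\<in>T. - (of_int (c' x) * x))"
        using disj by (intro sum.cong) (auto simp: C_def)
      then show ?thesis by (simp add: sum_negf)
    qed
    have Q: "(\<Sum>t\<in>T. of_int (c' t) * t) = - (of_int m * h)"
      using mc(2) by (metis add.commute add_eq_0_iff)
    have "(\<Sum>x\<in>S \<union> T. of_int (C x) * x) = - (of_int m * (\<Sum>s\<in>S. of_int (c s) * s)) + - (\<Sum>t\<in>T. of_int (c' t) * t)"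
      using split[of C] sS sT by simp
    also have "\<dots> = of_int m * h - of_int m * (\<Sum>s\<in>S. of_int (c s) * s)"
      unfolding Q by simp
    also have "\<dots> = of_int (m * k) * u" unfolding h_def by (simp add: algebra_simps)
    finally have "of_int (m * k) * u \<in> zspan (S \<union> T)" using zspan_sum[of C "S \<union> T"] by metis
    then show "\<exists>k. k \<noteq> 0 \<and> of_int k * u \<in> zspan (S \<union> T)" using kc mc by (metis mult_eq_0_iff)
  qed
  then have "card U \<le> card (S \<union> T)" using steinitz_mult[of "S \<union> T" U] S T U by simp
  then show ?thesis using ge U S T disj by (simp add: card_Un_disjoint)
qed

lemma primitive: assumes "sat H" "h \<in> H" "(h::'a) \<noteq> 0"
  shows "\<exists>w\<in>H. \<exists>\<mu>. additive_on UNIV \<mu> \<and> \<mu> w = 1"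
proof -
  define I where "I = {\<mu> h | \<mu>. additive_on UNIV \<mu>}"
  have Icl: "\<And>\<mu> \<nu> q. additive_on UNIV \<mu> \<Longrightarrow> additive_on UNIV \<nu> \<Longrightarrow> additive_on UNIV (\<lambda>x. \<mu> x - q * \<nu> x)"
    unfolding additive_on_def by (simp add: algebra_simps)
  obtain b where b: "b \<in> B" "coord h b \<noteq> 0" using coord_zero_imp assms(3) by blast
  define \<mu>1 where "\<mu>1 x = (if coord h b < 0 then -1 else 1) * coord x b" for x
  have "additive_on UNIV \<mu>1" unfolding \<mu>1_def additive_on_def by (simp add: coord_add algebra_simps)
  moreover have "\<mu>1 h = int (nat \<bar>coord h b\<bar>)" unfolding \<mu>1_def by auto
  ultimately have "\<exists>\<mu>. int (nat \<bar>coord h b\<bar>) = \<mu> h \<and> additive_on UNIV \<mu>" by metis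
  then have "int (nat \<bar>coord h b\<bar>) \<in> I" unfolding I_def by simp
  then have ex: "\<exists>n. 0 < n \<and> int n \<in> I" using b by (intro exI[of _ "nat \<bar>coord h b\<bar>"]) auto
  define g where "g = (LEAST n. 0 < n \<and> int n \<in> I)"
  have g: "0 < g" "int g \<in> I" using LeastI_ex[OF ex] unfolding g_def by auto
  then obtain \<mu>0 where \<mu>0: "additive_on UNIV \<mu>0" "\<mu>0 h = int g" unfolding I_def by auto
  have dvd: "int g dvd \<mu> h" if \<mu>: "additive_on UNIV \<mu>" for \<mu>
  proof -
    define q where "q = \<mu> h div int g"
    have "additive_on UNIV (\<lambda>x. \<mu> x - q * \<mu>0 x)" using Icl \<mu> \<mu>0(1) by blast
    moreover have "\<mu> h - q * \<mu>0 h = \<mu> h mod int g"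
      using \<mu>0(2) q_def by (simp add: minus_div_mult_eq_mod[symmetric] mult.commute)
    ultimately have "\<exists>\<nu>. \<mu> h mod int g = \<nu> h \<and> additive_on UNIV \<nu>" by metis
    then have r: "\<mu> h mod int g \<in> I" unfolding I_def by simp
    show ?thesis
    proof (rule ccontr)
      assume "\<not> int g dvd \<mu> h"
      then have ne: "\<mu> h mod int g \<noteq> 0" by (simp add: dvd_eq_mod_eq_0)
      have bnd: "0 \<le> \<mu> h mod int g" "\<mu> h mod int g < int g" using g by simp_all
      then have "0 < nat (\<mu> h mod int g) \<and> int (nat (\<mu> h mod int g)) \<in> I" using r ne by simp
      then have "g \<le> nat (\<mu> h mod int g)" unfolding g_def by (rule Least_le)
      then show False using bnd by simp
    qed
  qed
  define w where "w = (\<Sum>b\<in>B. of_int (coord h b div int g) * b)"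
  have gw: "of_int (int g) * w = h"
  proof -
    have "of_int (int g) * w = (\<Sum>b\<in>B. of_int (int g * (coord h b div int g)) * b)"
      unfolding w_def by (simp add: sum_distrib_left mult.assoc)
    also have "\<dots> = (\<Sum>b\<in>B. of_int (coord h b) * b)"
      using dvd[OF coord_additive] by (intro sum.cong) auto
    also have "\<dots> = h" using coord[of h] by simp
    finally show ?thesis .
  qed
  have "int g \<noteq> 0" using g by simp
  then have wH: "w \<in> H" using assms(1,2) gw unfolding sat_def by metis
  have "\<mu>0 (of_int (int g) * w) = int g * \<mu>0 w" by (rule ad_of_int[OF \<mu>0(1) sg_UNIV UNIV_I])
  then have "int g * \<mu>0 w = int g" using gw \<mu>0(2) by simp
  then have "\<mu>0 w = 1" using g by simp
  then show ?thesis using wH \<mu>0(1) by blast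
qed

end


definition dsys :: "'a::comm_ring_1 set \<Rightarrow> 'a set \<Rightarrow> ('a \<Rightarrow> 'a \<Rightarrow> int) \<Rightarrow> bool" where
  "dsys H S \<mu> \<longleftrightarrow> finite S \<and> S \<subseteq> H \<and> (\<forall>s\<in>S. additive_on UNIV (\<mu> s))
     \<and> (\<forall>s\<in>S. \<forall>s'\<in>S. \<mu> s s' = (if s = s' then 1 else 0))
     \<and> (\<forall>h\<in>H. h = (\<Sum>s\<in>S. of_int (\<mu> s h) * s))"

lemma dsys_empty: "H \<subseteq> {0} \<Longrightarrow> dsys H {} \<mu>"
  unfolding dsys_def by auto

context fr
begin

lemma dlemma_n:
  "add_subgroup H \<Longrightarrow> sat H \<Longrightarrow> (\<forall>S. finite S \<longrightarrow> S \<subseteq> H \<longrightarrow> indep S \<longrightarrow> card S \<le> n)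
   \<Longrightarrow> \<exists>S \<mu>. dsys (H::'a set) S \<mu>"
proof (induction n arbitrary: H)
  case 0
  show ?case
  proof (cases "H \<subseteq> {0}")
    case True then show ?thesis using dsys_empty by blast
  next
    case False
    then obtain h where h: "h \<in> H" "h \<noteq> 0" by blast
    then have "card {h} \<le> 0" using "0.prems"(3) indep_single by blast
    then show ?thesis by simp
  qed
next
  case (Suc m)
  note Hs = Suc.prems(1) and Hsat = Suc.prems(2) and Hb = Suc.prems(3)
  show ?case
  proof (cases "H \<subseteq> {0}")
    case True then show ?thesis using dsys_empty by blast
  next
    case False
    then obtain h where h: "h \<in> H" "h \<noteq> 0" by blast
    obtain w \<mu>0 where w: "w \<in> H" "additive_on UNIV \<mu>0" "\<mu>0 w = 1"
      using primitive[OF Hsat h] by blast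
    have m0: "\<mu>0 0 = 0" using ad_0[OF w(2)] by simp
    have madd: "\<And>x y. \<mu>0 (x + y) = \<mu>0 x + \<mu>0 y" using ad_add[OF w(2)] by simp
    have mneg: "\<And>x. \<mu>0 (- x) = - \<mu>0 x" using ad_uminus[OF w(2) sg_UNIV] by simp
    have mdiff: "\<And>x y. \<mu>0 (x - y) = \<mu>0 x - \<mu>0 y" using ad_diff[OF w(2) sg_UNIV] by simp
    have mint: "\<And>k x. \<mu>0 (of_int k * x) = k * \<mu>0 x" using ad_of_int[OF w(2) sg_UNIV] by simp
    define H' where "H' = {x\<in>H. \<mu>0 x = 0}"
    have H's: "add_subgroup H'"
      unfolding add_subgroup_def H'_def using Hs m0 madd mneg
      by (auto simp: sg0 sg_add sg_uminus)
    have H'sat: "sat H'"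
      unfolding sat_def H'_def using Hsat mint unfolding sat_def by auto
    have H'b: "\<forall>S. finite S \<longrightarrow> S \<subseteq> H' \<longrightarrow> indep S \<longrightarrow> card S \<le> m"
    proof (intro allI impI)
      fix S assume S: "finite S" "S \<subseteq> H'" "indep S"
      have wS: "w \<notin> S" using S(2) w(3) unfolding H'_def by auto
      have "indep (insert w S)"
      proof (rule indepI)
        fix c assume c: "(\<Sum>u\<in>insert w S. of_int (c u) * u) = 0"
        have "\<mu>0 (\<Sum>u\<in>insert w S. of_int (c u) * u) = (\<Sum>u\<in>insert w S. c u * \<mu>0 u)"
          by (rule ad_lincomb[OF w(2) sg_UNIV]) simp
        also have "\<dots> = c w * \<mu>0 w + (\<Sum>u\<in>S. c u * \<mu>0 u)" using S(1) wS by simp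
        also have "(\<Sum>u\<in>S. c u * \<mu>0 u) = 0" using S(2) unfolding H'_def by (intro sum.neutral) auto
        finally have "c w = 0" using c m0 w(3) by simp
        then have "(\<Sum>u\<in>S. of_int (c u) * u) = 0" using c S(1) wS by simp
        then have "\<forall>u\<in>S. c u = 0" using indepD[OF S(3)] by blast
        then show "\<forall>u\<in>insert w S. c u = 0" using \<open>c w = 0\<close> by blast
      qed
      moreover have "insert w S \<subseteq> H" using S(2) w(1) unfolding H'_def by auto
      ultimately have "card (insert w S) \<le> Suc m" using Hb S(1) by blast
      then show "card S \<le> m" using S(1) wS by simp
    qed
    obtain S' \<mu>' where D': "dsys H' S' \<mu>'" using Suc.IH[OF H's H'sat H'b] by blast
    have S'H': "S' \<subseteq> H'" and finS': "finite S'" using D' unfolding dsys_def by auto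
    have wS': "w \<notin> S'" using S'H' w(3) unfolding H'_def by auto
    have ad': "\<And>s. s \<in> S' \<Longrightarrow> additive_on UNIV (\<mu>' s)" using D' unfolding dsys_def by auto
    have dl': "\<And>s s'. s \<in> S' \<Longrightarrow> s' \<in> S' \<Longrightarrow> \<mu>' s s' = (if s = s' then 1 else 0)"
      using D' unfolding dsys_def by auto
    have sp': "\<And>x. x \<in> H' \<Longrightarrow> x = (\<Sum>s\<in>S'. of_int (\<mu>' s x) * s)"
      using D' unfolding dsys_def by auto
    define S where "S = insert w S'"
    define \<mu> where "\<mu> s = (if s = w then \<mu>0 else (\<lambda>v. \<mu>' s (v - of_int (\<mu>0 v) * w)))" for s
    have "dsys H S \<mu>"
      unfolding dsys_def
    proof (intro conjI ballI)
      show "finite S" using finS' S_def by simp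
      show "S \<subseteq> H" using S'H' w(1) unfolding S_def H'_def by auto
    next
      fix s assume s: "s \<in> S"
      show "additive_on UNIV (\<mu> s)"
      proof (cases "s = w")
        case True then show ?thesis using w(2) unfolding \<mu>_def by simp
      next
        case False
        then have sS': "s \<in> S'" using s S_def by simp
        have "\<mu>' s ((x + y) - of_int (\<mu>0 (x + y)) * w)
            = \<mu>' s (x - of_int (\<mu>0 x) * w) + \<mu>' s (y - of_int (\<mu>0 y) * w)" for x y
        proof -
          have e: "(x + y) - of_int (\<mu>0 (x + y)) * w = (x - of_int (\<mu>0 x) * w) + (y - of_int (\<mu>0 y) * w)"
            by (simp add: madd algebra_simps)
          show ?thesis unfolding e by (rule ad_add[OF ad'[OF sS']]) simp_all
        qed
        then show ?thesis using False unfolding \<mu>_def additive_on_def by simp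
      qed
    next
      fix s s' assume s: "s \<in> S" and s': "s' \<in> S"
      show "\<mu> s s' = (if s = s' then 1 else 0)"
      proof (cases "s = w")
        case True
        show ?thesis
        proof (cases "s' = w")
          case True then show ?thesis using \<open>s = w\<close> w(3) unfolding \<mu>_def by simp
        next
          case False
          then have "s' \<in> H'" using s' S'H' S_def by auto
          then show ?thesis using False \<open>s = w\<close> unfolding \<mu>_def H'_def by simp
        qed
      next
        case False
        then have sS': "s \<in> S'" using s S_def by simp
        show ?thesis
        proof (cases "s' = w")
          case True
          have "\<mu>' s 0 = 0" using ad_0[OF ad'[OF sS']] by simp
          then show ?thesis using True False w(3) unfolding \<mu>_def by simp
        next
          case False
          then have s'S': "s' \<in> S'" using s' S_def by simp
          then have "\<mu>0 s' = 0" using S'H' unfolding H'_def by auto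
          then show ?thesis using dl'[OF sS' s'S'] \<open>s \<noteq> w\<close> unfolding \<mu>_def by simp
        qed
      qed
    next
      fix x assume x: "x \<in> H"
      define x' where "x' = x - of_int (\<mu>0 x) * w"
      have "x' \<in> H'" unfolding H'_def x'_def
        using x w(1) w(3) mdiff mint by (auto intro: sg_diff[OF Hs] sg_of_int[OF Hs])
      then have x'e: "x' = (\<Sum>s\<in>S'. of_int (\<mu>' s x') * s)" by (rule sp')
      have "(\<Sum>s\<in>S. of_int (\<mu> s x) * s) = of_int (\<mu>0 x) * w + (\<Sum>s\<in>S'. of_int (\<mu> s x) * s)"
        unfolding S_def using finS' wS' by (simp add: \<mu>_def)
      also have "(\<Sum>s\<in>S'. of_int (\<mu> s x) * s) = (\<Sum>s\<in>S'. of_int (\<mu>' s x') * s)"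
        using wS' unfolding \<mu>_def x'_def by (intro sum.cong) auto
      also have "\<dots> = x'" using x'e by simp
      finally show "x = (\<Sum>s\<in>S. of_int (\<mu> s x) * s)" unfolding x'_def by simp
    qed
    then show ?thesis by blast
  qed
qed

lemma dlemma: "add_subgroup H \<Longrightarrow> sat H \<Longrightarrow> \<exists>S \<mu>. dsys (H::'a set) S \<mu>"
  using dlemma_n[of H "card B"] card_bound by blast

end


theorem lemma4p1:
  fixes \<chi> :: "'a::comm_ring_1 \<Rightarrow> int" and F :: "nat \<Rightarrow> 'a set" and d :: nat
  assumes free: "free_fg TYPE('a)"
    and chi_lin: "\<And>x y. \<chi> (x + y) = \<chi> x + \<chi> y"
    and unimod: "unimodular_pairing \<chi>"
    and subgrp: "\<And>i. add_subgroup (F i)"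
    and F0: "F 0 = UNIV"
    and Fdec: "\<And>i. F (Suc i) \<subseteq> F i"
    and Ftop: "\<And>k. k \<ge> d + 1 \<Longrightarrow> F k = {0}"
    and Fmult: "\<And>i j x y. x \<in> F i \<Longrightarrow> y \<in> F j \<Longrightarrow> x * y \<in> F (i + j)"
    and rk: "\<And>i. i \<le> d \<Longrightarrow> rank_quot (F i) (F (i + 1)) = rank_quot (F (d - i)) (F (d - i + 1))"
    and split: "\<And>i x (n::int). i \<le> d \<Longrightarrow> n \<noteq> 0 \<Longrightarrow> of_int n * x \<in> F i \<Longrightarrow> x \<in> F i"
  shows "\<forall>i\<le>d. induced_unimodular \<chi> F d i"
proof -
  obtain B :: "'a set" where B: "finite B" "\<forall>x::'a. \<exists>!c::'a \<Rightarrow> int. (\<forall>b. b \<notin> B \<longrightarrow> c b = 0) \<and> x = (\<Sum>b\<in>B. of_int (c b) * b)"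
    using free unfolding free_fg_def by blast
  interpret fr B by (rule fr.intro) (use B in auto)
  have chi0: "\<chi> 0 = 0" using chi_lin[of 0 0] by simp
  have pair_add: "additive_on UNIV (\<lambda>x. \<chi> (x * y))" for y
    unfolding additive_on_def by (simp add: distrib_right chi_lin)
  have ex_rep: "\<exists>x. \<forall>y. \<phi> y = \<chi> (x * y)" if "additive_on UNIV \<phi>" for \<phi>
    using unimod that unfolding unimodular_pairing_def by blast
  have perp0: "x = 0" if "\<forall>y. \<chi> (x * y) = 0" for x
  proof -
    have "additive_on UNIV (\<lambda>_. 0::int)" unfolding additive_on_def by simp
    then have "\<exists>!x. \<forall>y. (0::int) = \<chi> (x * y)" using unimod unfolding unimodular_pairing_def by blast
    moreover have "\<forall>y. (0::int) = \<chi> (0 * y)" using chi0 by simp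
    ultimately show ?thesis using that by (metis (no_types, lifting))
  qed
  have satF: "sat (F j)" if "j \<le> d" for j
    unfolding sat_def using split that by blast
  have Fanti: "F j \<subseteq> F i" if "i \<le> j" for i j
    using that
  proof (induction j)
    case 0 then show ?case by simp
  next
    case (Suc j) then show ?case using Fdec[of j] by (cases "i = Suc j") auto
  qed
  have Fzero: "\<chi> (x * y) = 0" if "x \<in> F i" "y \<in> F j" "d + 1 \<le> i + j" for x y i j
    using Fmult[OF that(1,2)] Ftop[OF that(3)] chi0 by simp
  define f where "f j = rank_quot (F j) {0}" for j
  define g where "g k = rank_quot (F k) (F (k + 1))" for k
  have fg: "f j = g j + f (Suc j)" for j
    unfolding f_def g_def using rank_add[OF subgrp subgrp Fdec[of j]] by simp
  have Bind: "indep B"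
  proof (rule indepI)
    fix c assume c: "(\<Sum>u\<in>B. of_int (c u) * u) = 0"
    define c' where "c' b = (if b \<in> B then c b else 0)" for b
    have "(\<Sum>u\<in>B. of_int (c' u) * u) = 0" using c unfolding c'_def by (simp cong: sum.cong)
    then have "coord 0 = c'" by (intro coord_unique) (auto simp: c'_def)
    moreover have "coord 0 = (\<lambda>_. 0)" by (intro coord_unique) auto
    ultimately show "\<forall>u\<in>B. c u = 0" unfolding c'_def by (metis)
  qed
  have f0: "f 0 = card B"
  proof -
    obtain S where S: "finite S" "S \<subseteq> F 0" "indep S" "card S = f 0"
      using rq_attained[of "{0}" "F 0"] unfolding f_def by auto
    have "f 0 \<le> card B" using card_bound S by metis
    moreover have "card B \<le> f 0" unfolding f_def using rq_upper[of "{0}" B "F 0"] Bind finB F0 by simp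
    ultimately show ?thesis by simp
  qed
  have fd: "f (d + 1) = 0"
  proof -
    obtain S where S: "finite S" "S \<subseteq> F (d+1)" "indep S" "card S = f (d+1)"
      using rq_attained[of "{0}" "F (d+1)"] unfolding f_def by auto
    have "S = {}"
    proof (rule ccontr)
      assume "S \<noteq> {}" then have "S = {0}" using S(2) Ftop[of "d+1"] by auto
      then show False using indepD[OF S(3), of "\<lambda>_. 1" 0] by simp
    qed
    then show ?thesis using S by simp
  qed
  have sym: "f i + f (d + 1 - i) = card B" if "i \<le> d + 1" for i
    using that
  proof (induction i)
    case 0 then show ?case using f0 fd by simp
  next
    case (Suc i)
    then have i: "i \<le> d" by simp
    have "g i = g (d - i)" using rk[OF i] unfolding g_def by simp
    moreover have "f i = g i + f (Suc i)" by (rule fg)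
    moreover have "f (d - i) = g (d - i) + f (Suc (d - i))" by (rule fg)
    moreover have "Suc (d - i) = d + 1 - i" "d + 1 - Suc i = d - i" using i by auto
    ultimately show ?case using Suc by simp
  qed
  have PB: "rank_quot {x. \<forall>y\<in>F j. \<chi> (x * y) = 0} {0} + f j \<le> card B" if j: "j \<le> d" for j
  proof -
    define H where "H = F j"
    define P where "P = {x. \<forall>y\<in>H. \<chi> (x * y) = 0}"
    obtain S \<mu> where D: "dsys H S \<mu>" using dlemma[OF subgrp satF[OF j]] unfolding H_def by blast
    have finS: "finite S" and SH: "S \<subseteq> H" and mad: "\<And>s. s \<in> S \<Longrightarrow> additive_on UNIV (\<mu> s)"
      and mdl: "\<And>s s'. s \<in> S \<Longrightarrow> s' \<in> S \<Longrightarrow> \<mu> s s' = (if s = s' then 1 else 0)"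
      and msp: "\<And>h. h \<in> H \<Longrightarrow> h = (\<Sum>s\<in>S. of_int (\<mu> s h) * s)"
      using D unfolding dsys_def by auto
    obtain T where T: "finite T" "T \<subseteq> P" "indep T" "card T = rank_quot P {0}"
      using rq_attained[of "{0}" P] by auto
    have "\<forall>s\<in>S. \<exists>x. \<forall>y. \<mu> s y = \<chi> (x * y)" using ex_rep mad by blast
    then obtain X where X: "\<And>s y. s \<in> S \<Longrightarrow> \<mu> s y = \<chi> (X s * y)" by metis
    have injX: "inj_on X S"
    proof (rule inj_onI)
      fix s s' assume ss: "s \<in> S" "s' \<in> S" "X s = X s'"
      have "\<mu> s s = \<mu> s' s" using X[of s s] X[of s' s] ss by simp
      then show "s = s'" using mdl[of s s] mdl[of s' s] ss by (auto split: if_splits)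
    qed
    have disj: "T \<inter> X ` S = {}"
    proof (rule ccontr)
      assume "T \<inter> X ` S \<noteq> {}"
      then obtain s where s: "s \<in> S" "X s \<in> T" by blast
      then have "\<chi> (X s * s) = 0" using T(2) SH unfolding P_def by blast
      moreover have "\<chi> (X s * s) = 1" using X[of s s] mdl[of s s] s by simp
      ultimately show False by simp
    qed
    have indTX: "indep (T \<union> X ` S)"
    proof (rule indepI)
      fix c assume c: "(\<Sum>u\<in>T \<union> X ` S. of_int (c u) * u) = 0"
      have cX: "c (X s') = 0" if s': "s' \<in> S" for s'
      proof -
        define \<pi> where "\<pi> v = \<chi> (v * s')" for v
        have pa: "additive_on UNIV \<pi>" unfolding \<pi>_def by (rule pair_add)
        have "\<pi> (\<Sum>u\<in>T \<union> X ` S. of_int (c u) * u) = (\<Sum>u\<in>T \<union> X ` S. c u * \<pi> u)"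
          by (rule ad_lincomb[OF pa sg_UNIV]) simp
        also have "\<dots> = (\<Sum>u\<in>T. c u * \<pi> u) + (\<Sum>u\<in>X ` S. c u * \<pi> u)"
          using sum.union_disjoint[OF T(1) _ disj] finS by simp
        also have "(\<Sum>u\<in>T. c u * \<pi> u) = 0"
          using T(2) SH s' unfolding P_def \<pi>_def by (intro sum.neutral) auto
        also have "(\<Sum>u\<in>X ` S. c u * \<pi> u) = (\<Sum>s\<in>S. c (X s) * \<pi> (X s))"
          using sum.reindex[OF injX] by simp
        also have "\<dots> = (\<Sum>s\<in>S. if s = s' then c (X s') else 0)"
          using X mdl s' unfolding \<pi>_def by (intro sum.cong) auto
        also have "\<dots> = c (X s')" using finS s' by simp
        finally show ?thesis using c chi0 unfolding \<pi>_def by simp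
      qed
      have "(\<Sum>u\<in>T \<union> X ` S. of_int (c u) * u) = (\<Sum>u\<in>T. of_int (c u) * u) + (\<Sum>u\<in>X ` S. of_int (c u) * u)"
        using sum.union_disjoint[OF T(1) _ disj] finS by simp
      moreover have "(\<Sum>u\<in>X ` S. of_int (c u) * u) = 0" using cX by (intro sum.neutral) auto
      ultimately have "(\<Sum>u\<in>T. of_int (c u) * u) = 0" using c by simp
      then have "\<forall>u\<in>T. c u = 0" using indepD[OF T(3)] by blast
      then show "\<forall>u\<in>T \<union> X ` S. c u = 0" using cX by blast
    qed
    have "card (T \<union> X ` S) \<le> card B" using card_bound indTX T(1) finS by simp
    moreover have "card (T \<union> X ` S) = card T + card S"
      using card_Un_disjoint[OF T(1) _ disj] finS card_image[OF injX] by simp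
    moreover have "f j \<le> card S"
    proof -
      obtain U where U: "finite U" "U \<subseteq> H" "indep U" "card U = f j"
        using rq_attained[of "{0}" H] unfolding f_def H_def by auto
      have "U \<subseteq> zspan S"
      proof
        fix u assume "u \<in> U"
        then have uH: "u \<in> H" using U(2) by blast
        define v where "v = (\<Sum>s\<in>S. of_int (\<mu> s u) * s)"
        have "v \<in> zspan S" unfolding v_def by (rule zspan_sum)
        moreover have "u = v" unfolding v_def by (rule msp[OF uH])
        ultimately show "u \<in> zspan S" by simp
      qed
      then show ?thesis using steinitz[OF finS U(1,3)] U(4) by simp
    qed
    ultimately show ?thesis using T(4) unfolding P_def H_def by simp
  qed
  have C: "x \<in> F j" if j: "1 \<le> j" "j \<le> d" and x: "\<forall>y\<in>F (d + 1 - j). \<chi> (x * y) = 0" for j x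
  proof -
    define P where "P = {x. \<forall>y\<in>F (d + 1 - j). \<chi> (x * y) = 0}"
    have jj: "d + 1 - j \<le> d" using j by simp
    have FP: "F j \<subseteq> P" unfolding P_def using Fzero j by auto
    have rP: "rank_quot P {0} \<le> f j"
      using PB[OF jj] sym[of j] j unfolding P_def by simp
    obtain S where S: "finite S" "S \<subseteq> F j" "indep S" "card S = f j"
      using rq_attained[of "{0}" "F j"] unfolding f_def by auto
    have "card S \<le> rank_quot P {0}" using rq_upper[of "{0}" S P] S FP by auto
    then have cS: "card S = rank_quot P {0}" using rP S(4) by simp
    have "x \<in> P" using x unfolding P_def by simp
    then obtain k c where kc: "k \<noteq> 0" "of_int k * x + (\<Sum>s\<in>S. of_int (c s) * s) \<in> {0}"
      using rq_max[of "{0}" S P x] S FP cS by auto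
    then have "of_int k * x = - (\<Sum>s\<in>S. of_int (c s) * s)" by (simp add: eq_neg_iff_add_eq_0)
    moreover have "- (\<Sum>s\<in>S. of_int (c s) * s) \<in> F j"
      using lincomb_in[OF subgrp S(2)] sg_uminus[OF subgrp] by blast
    ultimately show ?thesis using split[OF j(2) kc(1)] by simp
  qed
  show ?thesis
  proof (intro allI impI)
    fix i assume i: "i \<le> d"
    show "induced_unimodular \<chi> F d i"
      unfolding induced_unimodular_def
    proof (intro conjI allI impI ballI)
      fix \<phi> assume \<phi>: "additive_on (F (d - i)) \<phi> \<and> (\<forall>y\<in>F (d - i + 1). \<phi> y = 0)"
      define H where "H = F (d - i)"
      have Hs: "add_subgroup H" using subgrp unfolding H_def .
      obtain S \<mu> where D: "dsys H S \<mu>" using dlemma[OF Hs] satF[of "d - i"] unfolding H_def by auto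
      have finS: "finite S" and SH: "S \<subseteq> H" and mad: "\<And>s. s \<in> S \<Longrightarrow> additive_on UNIV (\<mu> s)"
        and msp: "\<And>h. h \<in> H \<Longrightarrow> h = (\<Sum>s\<in>S. of_int (\<mu> s h) * s)"
        using D unfolding dsys_def by auto
      define \<psi> where "\<psi> v = (\<Sum>s\<in>S. \<mu> s v * \<phi> s)" for v
      have "additive_on UNIV \<psi>"
        unfolding additive_on_def
      proof (intro ballI)
        fix a b :: 'a
        have "\<psi> (a + b) = (\<Sum>s\<in>S. \<mu> s a * \<phi> s + \<mu> s b * \<phi> s)"
        proof -
          have "\<And>s. s \<in> S \<Longrightarrow> \<mu> s (a + b) = \<mu> s a + \<mu> s b" using ad_add[OF mad] by blast
          then show ?thesis unfolding \<psi>_def by (intro sum.cong) (auto simp: distrib_right)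
        qed
        then show "\<psi> (a + b) = \<psi> a + \<psi> b" unfolding \<psi>_def by (simp add: sum.distrib)
      qed
      then obtain x where x: "\<And>y. \<psi> y = \<chi> (x * y)" using ex_rep by blast
      have \<psi>H: "\<psi> h = \<phi> h" if h: "h \<in> H" for h
      proof -
        have "\<phi> h = \<phi> (\<Sum>s\<in>S. of_int (\<mu> s h) * s)" by (rule arg_cong[of _ _ \<phi>], rule msp[OF h])
        also have "\<dots> = (\<Sum>s\<in>S. \<mu> s h * \<phi> s)"
          by (rule ad_lincomb[OF _ Hs SH]) (use \<phi> H_def in simp)
        finally show ?thesis unfolding \<psi>_def by simp
      qed
      have "x \<in> F i"
      proof (cases "i = 0")
        case True then show ?thesis using F0 by simp
      next
        case False
        have "\<forall>y\<in>F (d + 1 - i). \<chi> (x * y) = 0"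
        proof
          fix y assume y: "y \<in> F (d + 1 - i)"
          have e: "d + 1 - i = Suc (d - i)" using i by simp
          have yH: "y \<in> H" using y Fdec[of "d - i"] unfolding e H_def by auto
          have "\<chi> (x * y) = \<phi> y" using x[of y] \<psi>H[OF yH] by simp
          also have "\<dots> = 0" using \<phi> y e by simp
          finally show "\<chi> (x * y) = 0" .
        qed
        then show ?thesis using C[of i x] False i by simp
      qed
      moreover have "\<forall>y\<in>F (d - i). \<phi> y = \<chi> (x * y)" using x \<psi>H unfolding H_def by simp
      ultimately show "\<exists>x\<in>F i. \<forall>y\<in>F (d - i). \<phi> y = \<chi> (x * y)" by blast
    next
      fix x x' assume xx: "x \<in> F i" "x' \<in> F i" "\<forall>y\<in>F (d - i). \<chi> (x * y) = \<chi> (x' * y)"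
      have z: "\<chi> ((x - x') * y) = 0" if "y \<in> F (d - i)" for y
      proof -
        have "\<chi> (x * y) = \<chi> ((x - x') * y + x' * y)" by (simp add: algebra_simps)
        then show ?thesis using chi_lin[of "(x - x') * y" "x' * y"] xx(3) that by simp
      qed
      show "x - x' \<in> F (i + 1)"
      proof (cases "i = d")
        case True
        then have "x - x' = 0" using z F0 by (intro perp0) simp
        then show ?thesis using sg0[OF subgrp] by simp
      next
        case False
        then have "d + 1 - (i + 1) = d - i" "1 \<le> i + 1" "i + 1 \<le> d" using i by auto
        then show ?thesis using C[of "i + 1" "x - x'"] z by simp
      qed
    qed
  qed
qed


end
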